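(* Let $A,B\in\mathbb{M}_n$ be Hermitian matrices with $\sigma(A)\cup\sigma(B)\subset\mathbb{D}$, let $f,g\in\mathfrak{H}$, and let $X\in\mathbb{M}_n$. Then $$\|f(A)X\pm Xg(B)\|_2\le\left\|\frac{X+|A|X}{d_A}+\frac{X+X|B|}{d_B}\right\|_2$$ and $$\|f(A)Xg(B)\pm X\|_2\le\left\|\frac{I+|A|}{d_A}\,X\,\frac{I+|B|}{d_B}+X\right\|_2.$$
   Context: $\mathbb{M}_n$ is the algebra of $n\times n$ complex matrices; $\|\cdot\|_2$ is the Hilbert–Schmidt (Frobenius) norm; $|T|=(T^*T)^{1/2}$. $\mathbb{D}$ is the open unit disk, $d_A=\mathrm{dist}(\partial\mathbb{D},\sigma(A))$. $\mathfrak{H}$ is the set of analytic $f:\mathbb{D}\to\mathbb{C}$ with $\operatorname{Re}f>0$ and $f(0)=1$; $f(A)$ is defined by the functional calculus (for Hermitian $A=U\operatorname{diag}(\lambda_j)U^*$, $f(A)=U\operatorname{diag}(f(\lambda_j))U^*$). *)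

theory Defs
  imports "HOL-Analysis.Analysis" "Jordan_Normal_Form.Spectral_Radius"
begin

definition cadj :: "complex mat \<Rightarrow> complex mat" where
  "cadj A = mat (dim_col A) (dim_row A) (\<lambda>(i,j). cnj (A $$ (j,i)))"

definition hermitian_mat :: "complex mat \<Rightarrow> bool" where
  "hermitian_mat A \<longleftrightarrow> A \<in> carrier_mat (dim_row A) (dim_row A) \<and> cadj A = A"

definition unitary_mat :: "nat \<Rightarrow> complex mat \<Rightarrow> bool" where
  "unitary_mat n U \<longleftrightarrow> U \<in> carrier_mat n n \<and> cadj U * U = 1\<^sub>m n \<and> U * cadj U = 1\<^sub>m n"

definition mat_fun :: "(complex \<Rightarrow> complex) \<Rightarrow> complex mat \<Rightarrow> complex mat" where
  "mat_fun f A = (SOME F. \<exists>U lam. unitary_mat (dim_row A) U \<and>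
      A = U * mat_diag (dim_row A) lam * cadj U \<and>
      F = U * mat_diag (dim_row A) (\<lambda>j. f (lam j)) * cadj U)"

definition mat_abs :: "complex mat \<Rightarrow> complex mat" where
  "mat_abs T = mat_fun (\<lambda>z. complex_of_real (sqrt (Re z))) (cadj T * T)"

definition hs_norm :: "complex mat \<Rightarrow> real" where
  "hs_norm A = sqrt (\<Sum>i<dim_row A. \<Sum>j<dim_col A. (cmod (A $$ (i,j)))\<^sup>2)"

definition dA :: "complex mat \<Rightarrow> real" where
  "dA A = setdist (sphere 0 1) (spectrum A)"

definition Hclass :: "(complex \<Rightarrow> complex) set" where
  "Hclass = {f. f holomorphic_on ball 0 1 \<and> (\<forall>z\<in>ball 0 1. Re (f z) > 0) \<and> f 0 = 1}"

end

theory Submission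
  imports Defs "HOL-Complex_Analysis.Conformal_Mappings"
begin

lemma cadj_carrier[simp]: "cadj A \<in> carrier_mat (dim_col A) (dim_row A)"
  unfolding cadj_def by auto
lemma cadj_carrier_mat[simp]: "A \<in> carrier_mat n m \<Longrightarrow> cadj A \<in> carrier_mat m n"
  unfolding cadj_def by auto
lemma cadj_dims[simp]: "dim_row (cadj A) = dim_col A" "dim_col (cadj A) = dim_row A"
  unfolding cadj_def by auto
lemma cadj_index[simp]: "i < dim_col A \<Longrightarrow> j < dim_row A \<Longrightarrow> cadj A $$ (i,j) = cnj (A $$ (j,i))"
  unfolding cadj_def by auto
lemma cadj_cadj[simp]: "cadj (cadj A) = A"
  by (rule eq_matI) auto
lemma cadj_mult: assumes "A \<in> carrier_mat n m" "B \<in> carrier_mat m k"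
  shows "cadj (A * B) = cadj B * cadj A"
  using assms by (intro eq_matI) (auto simp: scalar_prod_def mult.commute)
lemma cadj_add: assumes "A \<in> carrier_mat n m" "B \<in> carrier_mat n m"
  shows "cadj (A + B) = cadj A + cadj B"
  using assms by (intro eq_matI) auto
lemma cadj_one[simp]: "cadj (1\<^sub>m n) = 1\<^sub>m n"
  by (intro eq_matI) auto
lemma cadj_diag: "cadj (mat_diag n d) = mat_diag n (\<lambda>i. cnj (d i))"
  by (intro eq_matI) (auto simp: mat_diag_def)

lemma unitary_carrier: "unitary_mat n U \<Longrightarrow> U \<in> carrier_mat n n" unfolding unitary_mat_def by auto
lemma unitary_cadj: "unitary_mat n U \<Longrightarrow> unitary_mat n (cadj U)"
  unfolding unitary_mat_def by auto
lemma unitaryI: "U \<in> carrier_mat n n \<Longrightarrow> cadj U * U = 1\<^sub>m n \<Longrightarrow> unitary_mat n U"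
  unfolding unitary_mat_def using mat_mult_left_right_inverse[of "cadj U" n U] by auto
lemma unitary_mult: assumes "unitary_mat n U" "unitary_mat n V" shows "unitary_mat n (U * V)"
proof (rule unitaryI)
  have U: "U \<in> carrier_mat n n" and V: "V \<in> carrier_mat n n" using assms unitary_carrier by auto
  show "U * V \<in> carrier_mat n n" using U V by auto
  have "cadj (U * V) * (U * V) = cadj V * (cadj U * U) * V"
    using U V by (simp add: cadj_mult assoc_mult_mat[of _ n n _ n _ n] mult_carrier_mat[of _ n n _ n])
  also have "\<dots> = 1\<^sub>m n" using assms V unfolding unitary_mat_def by auto
  finally show "cadj (U * V) * (U * V) = 1\<^sub>m n" .
qed

definition emb :: "complex \<Rightarrow> complex mat \<Rightarrow> complex mat" where
  "emb c M = mat (Suc (dim_row M)) (Suc (dim_col M)) (\<lambda>(i,j). if i = 0 then (if j = 0 then c else 0)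
      else if j = 0 then 0 else M $$ (i - 1, j - 1))"

lemma emb_dims[simp]: "dim_row (emb c M) = Suc (dim_row M)" "dim_col (emb c M) = Suc (dim_col M)"
  unfolding emb_def by auto

lemma emb_carrier[simp]: "M \<in> carrier_mat m k \<Longrightarrow> emb c M \<in> carrier_mat (Suc m) (Suc k)"
  unfolding emb_def by auto

lemma emb_mult: assumes M: "M \<in> carrier_mat m k" and N: "N \<in> carrier_mat k l"
  shows "emb a M * emb b N = emb (a * b) (M * N)"
proof (rule eq_matI)
  fix i j assume i: "i < dim_row (emb (a * b) (M * N))" and j: "j < dim_col (emb (a * b) (M * N))"
  have i': "i < Suc m" and j': "j < Suc l" using i j M N unfolding emb_def by auto
  have "(emb a M * emb b N) $$ (i, j) = (\<Sum>t = 0..<Suc k. emb a M $$ (i, t) * emb b N $$ (t, j))"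
    using i' j' M N by (simp add: scalar_prod_def del: sum.atLeast0_lessThan_Suc)
  also have "\<dots> = emb a M $$ (i, 0) * emb b N $$ (0, j) + (\<Sum>t = 0..<k. emb a M $$ (i, Suc t) * emb b N $$ (Suc t, j))"
    by (subst sum.atLeast0_lessThan_Suc_shift) simp
  also have "\<dots> = emb (a * b) (M * N) $$ (i, j)"
    using i' j' M N by (cases i; cases j) (auto simp: emb_def scalar_prod_def)
  finally show "(emb a M * emb b N) $$ (i, j) = emb (a * b) (M * N) $$ (i, j)" .
qed (use M N in \<open>auto simp: emb_def\<close>)

lemma emb_cadj: "cadj (emb a M) = emb (cnj a) (cadj M)"
  by (rule eq_matI) (auto simp: emb_def)

lemma emb_one: "emb 1 (1\<^sub>m m) = 1\<^sub>m (Suc m)"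
  by (rule eq_matI) (auto simp: emb_def)

lemma emb_diag: "emb e (mat_diag m d) = mat_diag (Suc m) (\<lambda>i. if i = 0 then e else d (i - 1))"
  by (rule eq_matI) (auto simp: emb_def mat_diag_def)

lemma cscalar_self: "v \<in> carrier_vec n \<Longrightarrow> v \<bullet>c v = complex_of_real (\<Sum>k<n. (cmod (v $ k))\<^sup>2)"
  by (auto simp: scalar_prod_def atLeast0LessThan intro!: sum.cong)
     (metis complex_norm_square of_real_power)

lemma unit_completion:
  fixes v :: "complex vec"
  assumes v: "v \<in> carrier_vec n" and v0: "v \<noteq> 0\<^sub>v n"
  shows "\<exists>U c. unitary_mat n U \<and> (\<forall>i<n. U $$ (i,0) = c * v $ i)"
proof -
  interpret cof_vec_space n "TYPE(complex)" .
  define b where "b = basis_completion v"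
  from basis_completion[OF v v0, folded b_def]
  have dist_b: "distinct b" and indep: "\<not> lin_dep (set b)" and bc: "set b \<subseteq> carrier_vec n"
    and hdb: "hd b = v" and len_b: "length b = n" by auto
  have n: "n \<noteq> 0" using v v0 by auto
  from hdb len_b n obtain vs where bv: "b = v # vs" by (cases b, auto)
  define ws where "ws = gram_schmidt n b"
  from gram_schmidt_result[OF bc dist_b indep refl, folded ws_def]
  have wsc: "set ws \<subseteq> carrier_vec n" and orth: "corthogonal ws" and len: "length ws = n"
    by (auto simp: len_b)
  have hdws: "hd ws = v" unfolding ws_def bv by (rule gram_schmidt_hd[OF v])
  have ws0: "ws ! 0 = v" using hdws n len by (cases ws) auto
  define s where "s j = sqrt (\<Sum>k<n. (cmod (ws ! j $ k))\<^sup>2)" for j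
  have wj: "ws ! j \<in> carrier_vec n" if "j < n" for j using wsc len that by auto
  have cs: "ws ! i \<bullet>c ws ! j = complex_of_real (s i * s j) * (if i = j then 1 else 0)"
    if "i < n" "j < n" for i j
  proof (cases "i = j")
    case True
    have "ws ! i \<bullet>c ws ! i = complex_of_real ((s i)\<^sup>2)"
      unfolding cscalar_self[OF wj[OF that(1)]] s_def by (simp add: sum_nonneg)
    then show ?thesis using True by (simp add: power2_eq_square)
  next
    case False
    then show ?thesis using corthogonalD[OF orth, of i j] that len by auto
  qed
  have spos: "s j \<noteq> 0" if "j < n" for j
  proof
    assume "s j = 0"
    then have "ws ! j \<bullet>c ws ! j = 0" using cs[OF that that] by simp
    then show False using corthogonalD[OF orth, of j j] that len by auto
  qed
  define U where "U = mat n n (\<lambda>(i,j). ws ! j $ i / complex_of_real (s j))"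
  have U: "U \<in> carrier_mat n n" unfolding U_def by auto
  have "cadj U * U = 1\<^sub>m n"
  proof (rule eq_matI)
    fix i j assume i: "i < dim_row (1\<^sub>m n)" and j: "j < dim_col (1\<^sub>m n)"
    then have i: "i < n" and j: "j < n" by auto
    have "(cadj U * U) $$ (i, j) = (\<Sum>k = 0..<n. cnj (ws ! i $ k) * ws ! j $ k) / (complex_of_real (s i * s j))"
      using i j U by (simp add: scalar_prod_def U_def sum_divide_distrib)
    also have "(\<Sum>k = 0..<n. cnj (ws ! i $ k) * ws ! j $ k) = ws ! j \<bullet>c ws ! i"
      using wj[OF i] wj[OF j] by (simp add: scalar_prod_def mult.commute)
    also have "\<dots> / complex_of_real (s i * s j) = 1\<^sub>m n $$ (i, j)"
      using cs[OF j i] spos[OF i] spos[OF j] i j by auto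
    finally show "(cadj U * U) $$ (i, j) = 1\<^sub>m n $$ (i, j)" .
  qed (use U in auto)
  then have "unitary_mat n U" using unitaryI[OF U] by auto
  moreover have "\<forall>i<n. U $$ (i,0) = (1 / complex_of_real (s 0)) * v $ i"
    using n ws0 unfolding U_def by auto
  ultimately show ?thesis by blast
qed

lemma hermitian_diag:
  fixes A :: "complex mat"
  assumes "A \<in> carrier_mat n n" "cadj A = A"
  shows "\<exists>U lam. unitary_mat n U \<and> cadj U * A * U = mat_diag n lam"
  using assms
proof (induction n arbitrary: A)
  case 0
  have "unitary_mat 0 (1\<^sub>m 0)" unfolding unitary_mat_def by auto
  moreover have "cadj (1\<^sub>m 0) * A * 1\<^sub>m 0 = mat_diag 0 (\<lambda>_. 0)"
    using 0 by (intro eq_matI) (auto simp: mat_diag_def)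
  ultimately show ?case by blast
next
  case (Suc m A)
  let ?N = "Suc m"
  have A: "A \<in> carrier_mat ?N ?N" and hA: "cadj A = A" using Suc by auto
  obtain e where "e \<in> spectrum A" using spectrum_non_empty[OF A] by auto
  then have ev: "eigenvalue A e" unfolding spectrum_def by auto
  define v where "v = find_eigenvector A e"
  have "eigenvector A v e" unfolding v_def by (rule find_eigenvector[OF A ev])
  then have v: "v \<in> carrier_vec ?N" and v0: "v \<noteq> 0\<^sub>v ?N" and Av: "A *\<^sub>v v = e \<cdot>\<^sub>v v"
    using A unfolding eigenvector_def by auto
  obtain U0 c where U0u: "unitary_mat ?N U0" and U0c: "\<forall>i<?N. U0 $$ (i,0) = c * v $ i"
    using unit_completion[OF v v0] by blast
  have U0: "U0 \<in> carrier_mat ?N ?N" using U0u unitary_carrier by auto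
  have U0U0: "cadj U0 * U0 = 1\<^sub>m ?N" using U0u unfolding unitary_mat_def by auto
  have AU0: "(A * U0) $$ (k, 0) = e * U0 $$ (k, 0)" if k: "k < ?N" for k
  proof -
    have "(A * U0) $$ (k, 0) = (\<Sum>t = 0..<?N. A $$ (k, t) * (c * v $ t))"
      using A U0 k U0c by (simp add: scalar_prod_def)
    also have "\<dots> = c * (A *\<^sub>v v) $ k"
      using A v k by (simp add: scalar_prod_def sum_distrib_left algebra_simps)
    also have "\<dots> = e * U0 $$ (k, 0)" using Av v k U0c by simp
    finally show ?thesis .
  qed
  define A' where "A' = cadj U0 * (A * U0)"
  have A': "A' \<in> carrier_mat ?N ?N" unfolding A'_def using A U0 by auto
  have A'0: "A' $$ (i, 0) = (if i = 0 then e else 0)" if i: "i < ?N" for i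
  proof -
    have "A' $$ (i, 0) = (\<Sum>k = 0..<?N. cadj U0 $$ (i, k) * (A * U0) $$ (k, 0))"
      unfolding A'_def using A U0 i by (simp add: scalar_prod_def)
    also have "\<dots> = e * (\<Sum>k = 0..<?N. cadj U0 $$ (i, k) * U0 $$ (k, 0))"
      by (simp add: AU0 sum_distrib_left algebra_simps)
    also have "(\<Sum>k = 0..<?N. cadj U0 $$ (i, k) * U0 $$ (k, 0)) = (cadj U0 * U0) $$ (i, 0)"
      using U0 i by (simp add: scalar_prod_def)
    finally show ?thesis using U0U0 i by auto
  qed
  have hA': "cadj A' = A'"
    unfolding A'_def using A U0 hA
    by (simp add: cadj_mult[of _ ?N ?N _ ?N] assoc_mult_mat[of _ ?N ?N _ ?N _ ?N] mult_carrier_mat[of _ ?N ?N _ ?N])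
  have A'0': "A' $$ (0, j) = (if j = 0 then e else 0)" if j: "j < ?N" for j
  proof -
    have "A' $$ (0, j) = cadj A' $$ (0, j)" using hA' by simp
    also have "\<dots> = cnj (A' $$ (j, 0))" using A' j by simp
    finally show ?thesis using A'0[OF j] A'0[of 0] by auto
  qed
  define A3 where "A3 = mat m m (\<lambda>(i,j). A' $$ (Suc i, Suc j))"
  have A3: "A3 \<in> carrier_mat m m" unfolding A3_def by auto
  have A'e: "A' = emb e A3"
  proof (rule eq_matI)
    fix i j assume "i < dim_row (emb e A3)" "j < dim_col (emb e A3)"
    then have i: "i < ?N" and j: "j < ?N" using A3 by auto
    show "A' $$ (i, j) = emb e A3 $$ (i, j)"
      using i j A'0 A'0' by (cases i; cases j) (auto simp: emb_def A3_def)
  qed (use A' A3 in auto)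
  have hA3: "cadj A3 = A3"
  proof (rule eq_matI)
    fix i j assume "i < dim_row A3" "j < dim_col A3"
    then have i: "i < m" and j: "j < m" using A3 by auto
    have "cadj A3 $$ (i, j) = cnj (A' $$ (Suc j, Suc i))" using i j A3 by (simp add: A3_def)
    also have "\<dots> = cadj A' $$ (Suc i, Suc j)" using A' i j by simp
    also have "\<dots> = A3 $$ (i, j)" using hA' i j by (simp add: A3_def)
    finally show "cadj A3 $$ (i, j) = A3 $$ (i, j)" .
  qed (use A3 in auto)
  obtain U3 lam where U3u: "unitary_mat m U3" and D3: "cadj U3 * A3 * U3 = mat_diag m lam"
    using Suc.IH[OF A3 hA3] by blast
  have U3: "U3 \<in> carrier_mat m m" using U3u unitary_carrier by auto
  define U1 where "U1 = emb 1 U3"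
  have U1: "U1 \<in> carrier_mat ?N ?N" unfolding U1_def using U3 by auto
  have "cadj U1 * U1 = 1\<^sub>m ?N"
    unfolding U1_def emb_cadj using U3 U3u
    by (simp add: emb_mult[of _ m m _ m] emb_one unitary_mat_def)
  then have U1u: "unitary_mat ?N U1" using unitaryI[OF U1] by auto
  have "cadj (U0 * U1) * A * (U0 * U1) = cadj U1 * A' * U1"
    unfolding A'_def using A U0 U1
    by (simp add: cadj_mult[of _ ?N ?N _ ?N] assoc_mult_mat[of _ ?N ?N _ ?N _ ?N] mult_carrier_mat[of _ ?N ?N _ ?N])
  also have "\<dots> = emb e (cadj U3 * A3 * U3)"
    unfolding A'e U1_def emb_cadj using U3 A3
    by (simp add: emb_mult[of _ m m _ m] mult_carrier_mat[of _ m m _ m])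
  also have "\<dots> = mat_diag ?N (\<lambda>i. if i = 0 then e else lam (i - 1))"
    unfolding D3 emb_diag ..
  finally show ?case using unitary_mult[OF U0u U1u] by blast
qed

lemma mat_diag_dims[simp]: "dim_row (mat_diag n d) = n" "dim_col (mat_diag n d) = n"
  unfolding mat_diag_def by auto

lemma unitary_simps:
  assumes "unitary_mat n U"
  shows "cadj U * U = 1\<^sub>m n" "U * cadj U = 1\<^sub>m n"
    "X \<in> carrier_mat n k \<Longrightarrow> cadj U * (U * X) = X"
    "X \<in> carrier_mat n k \<Longrightarrow> U * (cadj U * X) = X"
proof -
  have U: "U \<in> carrier_mat n n" using assms unitary_carrier by auto
  show 1: "cadj U * U = 1\<^sub>m n" and 2: "U * cadj U = 1\<^sub>m n" using assms unfolding unitary_mat_def by auto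
  show "X \<in> carrier_mat n k \<Longrightarrow> cadj U * (U * X) = X"
    using U by (simp add: assoc_mult_mat[of _ n n _ n _ k, symmetric] 1)
  show "X \<in> carrier_mat n k \<Longrightarrow> U * (cadj U * X) = X"
    using U by (simp add: assoc_mult_mat[of _ n n _ n _ k, symmetric] 2)
qed

lemma hermitian_decomp:
  fixes A :: "complex mat"
  assumes A: "A \<in> carrier_mat n n" and h: "cadj A = A"
  shows "\<exists>U lam. unitary_mat n U \<and> A = U * mat_diag n lam * cadj U"
proof -
  obtain U lam where Uu: "unitary_mat n U" and D: "cadj U * A * U = mat_diag n lam"
    using hermitian_diag[OF A h] by blast
  have U: "U \<in> carrier_mat n n" using Uu unitary_carrier by auto
  have "U * mat_diag n lam * cadj U = U * (cadj U * (A * (U * cadj U)))"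
    unfolding D[symmetric] using U A
    by (simp add: assoc_mult_mat[of _ n n _ n _ n] mult_carrier_mat[of _ n n _ n])
  also have "\<dots> = A" using Uu A by (simp add: unitary_simps)
  finally show ?thesis using Uu by metis
qed

lemma mat_fun_spec:
  assumes "\<exists>U lam. unitary_mat (dim_row A) U \<and> A = U * mat_diag (dim_row A) lam * cadj U"
  shows "\<exists>U lam. unitary_mat (dim_row A) U \<and> A = U * mat_diag (dim_row A) lam * cadj U \<and>
      mat_fun f A = U * mat_diag (dim_row A) (\<lambda>j. f (lam j)) * cadj U"
proof -
  have "\<exists>F. \<exists>U lam. unitary_mat (dim_row A) U \<and>
      A = U * mat_diag (dim_row A) lam * cadj U \<and>
      F = U * mat_diag (dim_row A) (\<lambda>j. f (lam j)) * cadj U" using assms by blast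
  from someI_ex[OF this] show ?thesis unfolding mat_fun_def by blast
qed

lemma fun_welldef:
  assumes Uu: "unitary_mat n U" and Vu: "unitary_mat n V"
    and E: "U * mat_diag n d1 * cadj U = V * mat_diag n d2 * cadj V"
  shows "U * mat_diag n (\<lambda>i. h (d1 i)) * cadj U = V * mat_diag n (\<lambda>i. h (d2 i)) * cadj V"
proof -
  have U: "U \<in> carrier_mat n n" and V: "V \<in> carrier_mat n n" using Uu Vu unitary_carrier by auto
  define W where "W = cadj V * U"
  have W: "W \<in> carrier_mat n n" unfolding W_def using U V by auto
  note ms = assoc_mult_mat[of _ n n _ n _ n] mult_carrier_mat[of _ n n _ n] unitary_simps(1,2)[OF Uu] unitary_simps(1,2)[OF Vu]
    unitary_simps(3,4)[OF Uu, of _ n] unitary_simps(3,4)[OF Vu, of _ n]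
  have "cadj V * (U * mat_diag n d1 * cadj U) * U = cadj V * (V * mat_diag n d2 * cadj V) * U"
    unfolding E ..
  then have WD: "W * mat_diag n d1 = mat_diag n d2 * W"
    unfolding W_def using U V by (simp add: ms)
  have Wij: "W $$ (i,j) * d1 j = d2 i * W $$ (i,j)" if "i < n" "j < n" for i j
  proof -
    have "(W * mat_diag n d1) $$ (i,j) = (mat_diag n d2 * W) $$ (i,j)" using WD by simp
    then show ?thesis
      using that W by (simp add: mat_diag_mult_left[OF W] mat_diag_mult_right[OF W])
  qed
  have WH: "W * mat_diag n (\<lambda>i. h (d1 i)) = mat_diag n (\<lambda>i. h (d2 i)) * W"
  proof (rule eq_matI)
    fix i j assume "i < dim_row (mat_diag n (\<lambda>i. h (d2 i)) * W)" "j < dim_col (mat_diag n (\<lambda>i. h (d2 i)) * W)"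
    then have i: "i < n" and j: "j < n" using W by auto
    have "W $$ (i,j) * h (d1 j) = h (d2 i) * W $$ (i,j)"
    proof (cases "W $$ (i,j) = 0")
      case False
      then have "d1 j = d2 i" using Wij[OF i j] by (simp add: mult.commute)
      then show ?thesis by (simp add: mult.commute)
    qed simp
    then show "(W * mat_diag n (\<lambda>i. h (d1 i))) $$ (i, j) = (mat_diag n (\<lambda>i. h (d2 i)) * W) $$ (i, j)"
      using i j W by (simp add: mat_diag_mult_left[OF W] mat_diag_mult_right[OF W])
  qed (use W in auto)
  have "V * (W * mat_diag n (\<lambda>i. h (d1 i))) * cadj U = V * (mat_diag n (\<lambda>i. h (d2 i)) * W) * cadj U"
    unfolding WH ..
  then show ?thesis unfolding W_def using U V by (simp add: ms)
qed

lemma cadj_self_entry: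
  assumes M: "M \<in> carrier_mat n k" and j: "j < k"
  shows "(cadj M * M) $$ (j,j) = complex_of_real (\<Sum>i<n. (cmod (M $$ (i,j)))\<^sup>2)"
  using M j by (auto simp: scalar_prod_def atLeast0LessThan intro!: sum.cong)
     (metis complex_norm_square of_real_power mult.commute)

lemma hs_norm_alt:
  assumes M: "M \<in> carrier_mat n k"
  shows "hs_norm M = sqrt (\<Sum>j<k. Re ((cadj M * M) $$ (j,j)))"
proof -
  have "hs_norm M = sqrt (\<Sum>i<n. \<Sum>j<k. (cmod (M $$ (i,j)))\<^sup>2)"
    unfolding hs_norm_def using M by auto
  also have "(\<Sum>i<n. \<Sum>j<k. (cmod (M $$ (i,j)))\<^sup>2) = (\<Sum>j<k. \<Sum>i<n. (cmod (M $$ (i,j)))\<^sup>2)"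
    by (rule sum.swap)
  also have "\<dots> = (\<Sum>j<k. Re ((cadj M * M) $$ (j,j)))"
    using cadj_self_entry[OF M] by simp
  finally show ?thesis .
qed

lemma hs_left:
  assumes Uu: "unitary_mat n U" and Z: "Z \<in> carrier_mat n k"
  shows "hs_norm (U * Z) = hs_norm Z"
proof -
  have U: "U \<in> carrier_mat n n" using Uu unitary_carrier by auto
  have UZ: "U * Z \<in> carrier_mat n k" using U Z by auto
  have "cadj (U * Z) * (U * Z) = cadj Z * (cadj U * (U * Z))"
    using U Z by (simp add: cadj_mult[OF U Z] assoc_mult_mat[of _ k n _ n _ k])
  also have "\<dots> = cadj Z * Z" using unitary_simps(3)[OF Uu Z] by simp
  finally show ?thesis unfolding hs_norm_alt[OF UZ] hs_norm_alt[OF Z] by simp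
qed

lemma hs_cadj: "hs_norm (cadj M) = hs_norm M"
proof -
  have "hs_norm (cadj M) = sqrt (\<Sum>i<dim_col M. \<Sum>j<dim_row M. (cmod (M $$ (j,i)))\<^sup>2)"
    unfolding hs_norm_def by simp
  also have "(\<Sum>i<dim_col M. \<Sum>j<dim_row M. (cmod (M $$ (j,i)))\<^sup>2) =
      (\<Sum>j<dim_row M. \<Sum>i<dim_col M. (cmod (M $$ (j,i)))\<^sup>2)" by (rule sum.swap)
  finally show ?thesis unfolding hs_norm_def .
qed

lemma hs_right:
  assumes Wu: "unitary_mat k W" and Z: "Z \<in> carrier_mat n k"
  shows "hs_norm (Z * cadj W) = hs_norm Z"
proof -
  have W: "W \<in> carrier_mat k k" using Wu unitary_carrier by auto
  have "hs_norm (Z * cadj W) = hs_norm (cadj (Z * cadj W))" by (simp add: hs_cadj)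
  also have "cadj (Z * cadj W) = W * cadj Z" using W Z by (simp add: cadj_mult[of _ n k _ k])
  also have "hs_norm (W * cadj Z) = hs_norm (cadj Z)" using hs_left[OF Wu, of "cadj Z" n] Z by auto
  finally show ?thesis by (simp add: hs_cadj)
qed

lemma hs_mono:
  assumes P: "P \<in> carrier_mat n k" and Q: "Q \<in> carrier_mat n k"
    and le: "\<And>i j. i < n \<Longrightarrow> j < k \<Longrightarrow> cmod (P $$ (i,j)) \<le> cmod (Q $$ (i,j))"
  shows "hs_norm P \<le> hs_norm Q"
  unfolding hs_norm_def using P Q le
  by (auto intro!: real_sqrt_le_mono sum_mono power_mono)

context
  fixes n :: nat and V W :: "complex mat"
  assumes Vu: "unitary_mat n V" and Wu: "unitary_mat n W"
begin

lemma VW: "V \<in> carrier_mat n n" "W \<in> carrier_mat n n" "cadj W \<in> carrier_mat n n" "cadj V \<in> carrier_mat n n"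
  using Vu Wu unitary_carrier by auto

lemma hs_psi: "P \<in> carrier_mat n n \<Longrightarrow> hs_norm (V * P * cadj W) = hs_norm P"
  using VW hs_left[OF Vu, of "P * cadj W" n] hs_right[OF Wu, of P n]
  by (simp add: assoc_mult_mat[of _ n n _ n _ n])

lemma psi_add: "P \<in> carrier_mat n n \<Longrightarrow> Q \<in> carrier_mat n n \<Longrightarrow>
    V * P * cadj W + V * Q * cadj W = V * (P + Q) * cadj W"
proof -
  assume P: "P \<in> carrier_mat n n" and Q: "Q \<in> carrier_mat n n"
  have "V * (P + Q) = V * P + V * Q" by (rule mult_add_distrib_mat) (use VW P Q in auto)
  moreover have "(V * P + V * Q) * cadj W = V * P * cadj W + V * Q * cadj W"
    by (rule add_mult_distrib_mat) (use VW P Q in auto)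
  ultimately show ?thesis by simp
qed

lemma psi_minus: "P \<in> carrier_mat n n \<Longrightarrow> Q \<in> carrier_mat n n \<Longrightarrow>
    V * P * cadj W - V * Q * cadj W = V * (P - Q) * cadj W"
proof -
  assume P: "P \<in> carrier_mat n n" and Q: "Q \<in> carrier_mat n n"
  have "V * (P - Q) = V * P - V * Q" by (rule mult_minus_distrib_mat) (use VW P Q in auto)
  moreover have "(V * P - V * Q) * cadj W = V * P * cadj W - V * Q * cadj W"
    by (rule minus_mult_distrib_mat) (use VW P Q in auto)
  ultimately show ?thesis by simp
qed

lemma psi_smult: "P \<in> carrier_mat n n \<Longrightarrow> c \<cdot>\<^sub>m (V * P * cadj W) = V * (c \<cdot>\<^sub>m P) * cadj W"
proof -
  assume P: "P \<in> carrier_mat n n"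
  have "V * (c \<cdot>\<^sub>m P) = c \<cdot>\<^sub>m (V * P)" by (rule mult_smult_distrib) (use VW P in auto)
  moreover have "(c \<cdot>\<^sub>m (V * P)) * cadj W = c \<cdot>\<^sub>m (V * P * cadj W)"
    by (rule mult_smult_assoc_mat) (use VW P in auto)
  ultimately show ?thesis by simp
qed

lemma psi_left: "P \<in> carrier_mat n n \<Longrightarrow> D \<in> carrier_mat n n \<Longrightarrow>
    (V * D * cadj V) * (V * P * cadj W) = V * (D * P) * cadj W"
  using VW unitary_simps(3)[OF Vu, of _ n]
  by (simp add: assoc_mult_mat[of _ n n _ n _ n] mult_carrier_mat[of _ n n _ n])

lemma psi_right: "P \<in> carrier_mat n n \<Longrightarrow> D \<in> carrier_mat n n \<Longrightarrow>
    (V * P * cadj W) * (W * D * cadj W) = V * (P * D) * cadj W"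
  using VW unitary_simps(3)[OF Wu, of _ n]
  by (simp add: assoc_mult_mat[of _ n n _ n _ n] mult_carrier_mat[of _ n n _ n])

end

lemma cmod_minus_lt_plus:
  fixes w :: complex assumes "Re w > 0" shows "cmod (w - 1) < cmod (w + 1)"
proof -
  have a: "(cmod (w - 1))\<^sup>2 = (Re w - 1)\<^sup>2 + (Im w)\<^sup>2" by (simp add: cmod_power2)
  have b: "(cmod (w + 1))\<^sup>2 = (Re w + 1)\<^sup>2 + (Im w)\<^sup>2" by (simp add: cmod_power2)
  have "(cmod (w - 1))\<^sup>2 < (cmod (w + 1))\<^sup>2"
    unfolding a b using assms by (simp add: power2_eq_square algebra_simps)
  then show ?thesis by (rule power_less_imp_less_base) simp
qed

lemma Hclass_bound:
  assumes f: "f \<in> Hclass" and z: "cmod z < 1"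
  shows "cmod (f z) \<le> (1 + cmod z) / (1 - cmod z)"
proof -
  have hol: "f holomorphic_on ball 0 1" and re: "\<And>w. w \<in> ball 0 1 \<Longrightarrow> Re (f w) > 0"
    and f0: "f 0 = 1" using f unfolding Hclass_def by auto
  define g where "g w = (f w - 1) / (f w + 1)" for w
  have nz: "f w + 1 \<noteq> 0" if "w \<in> ball 0 1" for w
  proof
    assume "f w + 1 = 0"
    then have "Re (f w + 1) = 0" by simp
    then show False using re[OF that] by simp
  qed
  have holg: "g holomorphic_on ball 0 1"
    unfolding g_def using hol nz by (auto intro!: holomorphic_intros)
  have g0: "g 0 = 0" unfolding g_def f0 by simp
  have glt: "norm (g w) < 1" if "norm w < 1" for w
  proof -
    have w: "w \<in> ball 0 1" using that by simp
    have "cmod (f w - 1) < cmod (f w + 1)" using cmod_minus_lt_plus re[OF w] by blast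
    then show ?thesis unfolding g_def using nz[OF w] by (simp add: norm_divide divide_less_eq)
  qed
  have gz: "cmod (g z) \<le> cmod z" using Schwarz_Lemma(1)[OF holg g0 glt z] by simp
  define p where "p = g z"
  have zb: "z \<in> ball 0 1" using z by simp
  have p1: "cmod p < 1" unfolding p_def using glt z by simp
  have np: "1 - p \<noteq> 0" using p1 by auto
  have "p * (f z + 1) = f z - 1" unfolding p_def g_def using nz[OF zb] by simp
  then have "f z * (1 - p) = 1 + p" by (simp add: algebra_simps)
  then have fz: "f z = (1 + p) / (1 - p)" using np by (simp add: field_simps)
  have num: "cmod (1 + p) \<le> 1 + cmod p" using norm_triangle_ineq[of 1 p] by simp
  have den: "1 - cmod p \<le> cmod (1 - p)" using norm_triangle_ineq2[of 1 p] by simp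
  have "cmod (f z) = cmod (1 + p) / cmod (1 - p)" unfolding fz by (simp add: norm_divide)
  also have "\<dots> \<le> (1 + cmod p) / (1 - cmod p)"
    using num den p1 by (intro frac_le) auto
  also have "\<dots> \<le> (1 + cmod z) / (1 - cmod z)"
    using gz p1 z unfolding p_def apply (simp add: divide_simps) apply (simp add: algebra_simps) done
  finally show ?thesis .
qed

lemma dA_facts:
  fixes A :: "complex mat"
  assumes A: "A \<in> carrier_mat n n" and sp: "spectrum A \<subseteq> ball 0 1" and z: "z \<in> spectrum A"
  shows "dA A > 0" "dA A \<le> 1 - cmod z"
proof -
  have fin: "finite (spectrum A)" using card_finite_spectrum[OF A] by simp
  have "setdist (sphere 0 1) (spectrum A) \<noteq> 0"
  proof
    assume "setdist (sphere 0 1) (spectrum A) = 0"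
    then have "sphere (0::complex) 1 = {} \<or> spectrum A = {} \<or> sphere 0 1 \<inter> spectrum A \<noteq> {}"
      using setdist_eq_0_compact_closed[of "sphere (0::complex) 1" "spectrum A"] fin
      by (simp add: finite_imp_closed)
    then show False using z sp by auto
  qed
  then show "dA A > 0" unfolding dA_def using setdist_pos_le[of "sphere 0 1" "spectrum A"] by linarith
  have zl: "cmod z < 1" using z sp by auto
  define x where "x = (if z = 0 then 1 else z / complex_of_real (cmod z))"
  have xs: "x \<in> sphere 0 1" unfolding x_def by (auto simp: norm_divide)
  have "dist x z = 1 - cmod z"
  proof (cases "z = 0")
    case False
    have "x - z = z * complex_of_real (1 / cmod z - 1)" unfolding x_def using False
      by (simp add: field_simps)
    then have "dist x z = cmod z * cmod (complex_of_real (1 / cmod z - 1))"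
      unfolding dist_norm by (simp only: norm_mult)
    also have "cmod (complex_of_real (1 / cmod z - 1)) = \<bar>1 / cmod z - 1\<bar>"
      by (rule norm_of_real)
    also have "\<bar>1 / cmod z - 1\<bar> = 1 / cmod z - 1"
      using False zl by (simp add: field_simps)
    finally show ?thesis using False by (simp add: right_diff_distrib)
  qed (simp add: x_def)
  then show "dA A \<le> 1 - cmod z" unfolding dA_def using setdist_le_dist[OF xs z] by simp
qed

lemma diag_eigen:
  fixes A :: "complex mat"
  assumes Vu: "unitary_mat n V" and AV: "A = V * mat_diag n mu * cadj V" and i: "i < n"
  shows "mu i \<in> spectrum A"
proof -
  have V: "V \<in> carrier_mat n n" using Vu unitary_carrier by auto
  have A: "A \<in> carrier_mat n n" unfolding AV using V by auto
  have AVe: "A * V = V * mat_diag n mu"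
    unfolding AV using V unitary_simps(1)[OF Vu]
    by (simp add: assoc_mult_mat[of _ n n _ n _ n] mult_carrier_mat[of _ n n _ n])
  define v where "v = col V i"
  have v: "v \<in> carrier_vec n" unfolding v_def using V by auto
  have "A *\<^sub>v v = col (A * V) i" unfolding v_def using col_mult2[OF A V i] by simp
  also have "\<dots> = mu i \<cdot>\<^sub>v v" unfolding AVe v_def
    using V i by (intro eq_vecI) (auto simp: mat_diag_mult_right[OF V] mult.commute)
  finally have Av: "A *\<^sub>v v = mu i \<cdot>\<^sub>v v" .
  have "v \<noteq> 0\<^sub>v n"
  proof
    assume v0: "v = 0\<^sub>v n"
    have "(cadj V * V) $$ (i,i) = row (cadj V) i \<bullet> col V i" using V i by simp
    also have "\<dots> = 0" using v0 unfolding v_def by (simp add: scalar_prod_def)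
    finally show False using unitary_simps(1)[OF Vu] i by simp
  qed
  then have "eigenvector A v (mu i)" unfolding eigenvector_def using v Av A by auto
  then show ?thesis unfolding spectrum_def eigenvalue_def by auto
qed


lemma diag_diag_assoc: "X \<in> carrier_mat n k \<Longrightarrow> mat_diag n a * (mat_diag n b * X) = mat_diag n (\<lambda>i. a i * b i) * X"
  by (simp add: assoc_mult_mat[of _ n n _ n _ k, symmetric])

lemma mat_abs_decomp:
  fixes A :: "complex mat"
  assumes Vu: "unitary_mat n V" and AV: "A = V * mat_diag n mu * cadj V"
  shows "mat_abs A = V * mat_diag n (\<lambda>j. complex_of_real (cmod (mu j))) * cadj V"
proof -
  have V: "V \<in> carrier_mat n n" using Vu unitary_carrier by auto
  note ms = assoc_mult_mat[of _ n n _ n _ n] mult_carrier_mat[of _ n n _ n] unitary_simps(1,2)[OF Vu]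
    unitary_simps(3,4)[OF Vu, of _ n]
  have cA: "cadj A = V * mat_diag n (\<lambda>i. cnj (mu i)) * cadj V"
    unfolding AV using V by (simp add: cadj_mult[of _ n n _ n] mult_carrier_mat[of _ n n _ n] cadj_diag assoc_mult_mat[of _ n n _ n _ n])
  have AA: "cadj A * A = V * mat_diag n (\<lambda>i. cnj (mu i) * mu i) * cadj V"
  proof -
    have "cadj A * A = (V * mat_diag n (\<lambda>i. cnj (mu i)) * cadj V) * (V * mat_diag n mu * cadj V)"
      by (simp only: cA) (simp only: AV)
    also have "\<dots> = V * mat_diag n (\<lambda>i. cnj (mu i) * mu i) * cadj V" using V by (simp add: ms diag_diag_assoc[of _ n n])
    finally show ?thesis .
  qed
  have dr: "dim_row (cadj A * A) = n" using V unfolding AV by simp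
  define h where "h z = complex_of_real (sqrt (Re z))" for z :: complex
  have "\<exists>U lam. unitary_mat (dim_row (cadj A * A)) U \<and> cadj A * A = U * mat_diag (dim_row (cadj A * A)) lam * cadj U"
    unfolding dr using AA Vu by blast
  from mat_fun_spec[OF this, of h] obtain U lam where Uu: "unitary_mat n U"
    and E: "cadj A * A = U * mat_diag n lam * cadj U" and M: "mat_fun h (cadj A * A) = U * mat_diag n (\<lambda>j. h (lam j)) * cadj U"
    unfolding dr by blast
  have "mat_abs A = U * mat_diag n (\<lambda>j. h (lam j)) * cadj U"
    using M unfolding mat_abs_def h_def by simp
  also have "\<dots> = V * mat_diag n (\<lambda>j. h (cnj (mu j) * mu j)) * cadj V"
    by (rule fun_welldef[OF Uu Vu]) (use E AA in simp)
  also have "(\<lambda>j. h (cnj (mu j) * mu j)) = (\<lambda>j. complex_of_real (cmod (mu j)))"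
  proof
    fix j
    have "cnj (mu j) * mu j = complex_of_real ((cmod (mu j))\<^sup>2)"
      by (metis complex_norm_square mult.commute)
    then show "h (cnj (mu j) * mu j) = complex_of_real (cmod (mu j))" unfolding h_def by simp
  qed
  finally show ?thesis .
qed

lemma diag_left_idx: "Y \<in> carrier_mat n n \<Longrightarrow> i < n \<Longrightarrow> j < n \<Longrightarrow> (mat_diag n d * Y) $$ (i,j) = d i * Y $$ (i,j)"
  by (simp add: mat_diag_mult_left)
lemma diag_right_idx: "Y \<in> carrier_mat n n \<Longrightarrow> i < n \<Longrightarrow> j < n \<Longrightarrow> (Y * mat_diag n d) $$ (i,j) = Y $$ (i,j) * d j"
  by (simp add: mat_diag_mult_right)

lemma sc_rhs1:
  assumes "d1 > 0" "d2 > 0" "a \<ge> 0" "b \<ge> 0"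
  shows "cmod (1 / complex_of_real d1 * (y + complex_of_real a * y) + 1 / complex_of_real d2 * (y + y * complex_of_real b))
    = cmod y * ((1 + a) / d1 + (1 + b) / d2)"
proof -
  have "1 / complex_of_real d1 * (y + complex_of_real a * y) + 1 / complex_of_real d2 * (y + y * complex_of_real b)
      = y * complex_of_real ((1 + a) / d1 + (1 + b) / d2)"
    using assms by (simp add: field_simps)
  also have "cmod \<dots> = cmod y * ((1 + a) / d1 + (1 + b) / d2)"
  proof -
    have r0: "(1 + a) / d1 + (1 + b) / d2 \<ge> 0" using assms by simp
    show ?thesis by (simp only: norm_mult norm_of_real abs_of_nonneg[OF r0])
  qed
  finally show ?thesis .
qed

lemma sc_rhs2:
  assumes "d1 > 0" "d2 > 0" "a \<ge> 0" "b \<ge> 0"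
  shows "cmod (1 / complex_of_real d1 * (1 + complex_of_real a) * y * (1 / complex_of_real d2 * (1 + complex_of_real b)) + y)
    = cmod y * ((1 + a) / d1 * ((1 + b) / d2) + 1)"
proof -
  have "1 / complex_of_real d1 * (1 + complex_of_real a) * y * (1 / complex_of_real d2 * (1 + complex_of_real b)) + y
      = y * complex_of_real ((1 + a) / d1 * ((1 + b) / d2) + 1)"
    using assms by (simp add: field_simps)
  also have "cmod \<dots> = cmod y * ((1 + a) / d1 * ((1 + b) / d2) + 1)"
  proof -
    have r0: "(1 + a) / d1 * ((1 + b) / d2) + 1 \<ge> 0" using assms by simp
    show ?thesis by (simp only: norm_mult norm_of_real abs_of_nonneg[OF r0])
  qed
  finally show ?thesis .
qed

lemma sc_lhs:
  fixes p q y :: complex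
  assumes p: "cmod p \<le> P" and q: "cmod q \<le> Q"
  shows "cmod (p * y + y * q) \<le> cmod y * (P + Q)" "cmod (p * y - y * q) \<le> cmod y * (P + Q)"
    "cmod (p * y * q + y) \<le> cmod y * (P * Q + 1)" "cmod (p * y * q - y) \<le> cmod y * (P * Q + 1)"
proof -
  have P0: "P \<ge> 0" and Q0: "Q \<ge> 0" using p q norm_ge_zero order_trans by blast+
  have a: "cmod (p * y) \<le> cmod y * P" using mult_right_mono[OF p norm_ge_zero[of y]] by (simp add: norm_mult mult.commute)
  have b: "cmod (y * q) \<le> cmod y * Q" using q by (simp add: norm_mult mult_left_mono)
  show "cmod (p * y + y * q) \<le> cmod y * (P + Q)"
    using norm_triangle_ineq[of "p * y" "y * q"] a b by (simp add: distrib_left)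
  show "cmod (p * y - y * q) \<le> cmod y * (P + Q)"
    using norm_triangle_ineq4[of "p * y" "y * q"] a b by (simp add: distrib_left)
  have c: "cmod (p * y * q) \<le> cmod y * (P * Q)"
  proof -
    have "cmod (p * y * q) = cmod y * (cmod p * cmod q)" by (simp add: norm_mult)
    also have "\<dots> \<le> cmod y * (P * Q)" using p q P0 by (intro mult_left_mono mult_mono) auto
    finally show ?thesis .
  qed
  show "cmod (p * y * q + y) \<le> cmod y * (P * Q + 1)"
    using norm_triangle_ineq[of "p * y * q" y] c by (simp add: distrib_left)
  show "cmod (p * y * q - y) \<le> cmod y * (P * Q + 1)"
    using norm_triangle_ineq4[of "p * y * q" y] c by (simp add: distrib_left)
qed

lemma spec_bound:
  fixes A :: "complex mat"
  assumes A: "A \<in> carrier_mat n n" and sp: "spectrum A \<subseteq> ball 0 1" and z: "z \<in> spectrum A"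
    and f: "f \<in> Hclass"
  shows "cmod (f z) \<le> (1 + cmod z) / dA A"
proof -
  have d: "dA A > 0" "dA A \<le> 1 - cmod z" using dA_facts[OF A sp z] by auto
  have zl: "cmod z < 1" using z sp by auto
  have "cmod (f z) \<le> (1 + cmod z) / (1 - cmod z)" using Hclass_bound[OF f zl] .
  also have "\<dots> \<le> (1 + cmod z) / dA A" using d zl by (intro divide_left_mono) auto
  finally show ?thesis .
qed


theorem theorem3p3:
  fixes n :: nat and A B X :: "complex mat" and f g :: "complex \<Rightarrow> complex"
  assumes "A \<in> carrier_mat n n" and "B \<in> carrier_mat n n" and "X \<in> carrier_mat n n"
    and "hermitian_mat A" and "hermitian_mat B"
    and "spectrum A \<union> spectrum B \<subseteq> ball 0 1"
    and "f \<in> Hclass" and "g \<in> Hclass"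
  shows "hs_norm (mat_fun f A * X + X * mat_fun g B)
           \<le> hs_norm ((1 / complex_of_real (dA A)) \<cdot>\<^sub>m (X + mat_abs A * X)
                      + (1 / complex_of_real (dA B)) \<cdot>\<^sub>m (X + X * mat_abs B)) \<and>
         hs_norm (mat_fun f A * X - X * mat_fun g B)
           \<le> hs_norm ((1 / complex_of_real (dA A)) \<cdot>\<^sub>m (X + mat_abs A * X)
                      + (1 / complex_of_real (dA B)) \<cdot>\<^sub>m (X + X * mat_abs B)) \<and>
         hs_norm (mat_fun f A * X * mat_fun g B + X)
           \<le> hs_norm ((1 / complex_of_real (dA A)) \<cdot>\<^sub>m (1\<^sub>m n + mat_abs A) * X
                        * ((1 / complex_of_real (dA B)) \<cdot>\<^sub>m (1\<^sub>m n + mat_abs B)) + X) \<and>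
         hs_norm (mat_fun f A * X * mat_fun g B - X)
           \<le> hs_norm ((1 / complex_of_real (dA A)) \<cdot>\<^sub>m (1\<^sub>m n + mat_abs A) * X
                        * ((1 / complex_of_real (dA B)) \<cdot>\<^sub>m (1\<^sub>m n + mat_abs B)) + X)"
proof -
  note assms' = assms
  have A: "A \<in> carrier_mat n n" and B: "B \<in> carrier_mat n n" and X: "X \<in> carrier_mat n n"
    using assms by auto
  have hA: "cadj A = A" and hB: "cadj B = B" using assms(4,5) unfolding hermitian_mat_def by auto
  have spA: "spectrum A \<subseteq> ball 0 1" and spB: "spectrum B \<subseteq> ball 0 1" using assms(6) by auto
  have f: "f \<in> Hclass" and g: "g \<in> Hclass" using assms by auto
  have drA: "dim_row A = n" and drB: "dim_row B = n" using A B by auto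
  obtain V mu where Vu: "unitary_mat n V" and AV: "A = V * mat_diag n mu * cadj V"
      and fA: "mat_fun f A = V * mat_diag n (\<lambda>j. f (mu j)) * cadj V"
    using mat_fun_spec[of A f] hermitian_decomp[OF A hA] unfolding drA by blast
  obtain W nu where Wu: "unitary_mat n W" and BW: "B = W * mat_diag n nu * cadj W"
      and gB: "mat_fun g B = W * mat_diag n (\<lambda>j. g (nu j)) * cadj W"
    using mat_fun_spec[of B g] hermitian_decomp[OF B hB] unfolding drB by blast
  have absA: "mat_abs A = V * mat_diag n (\<lambda>j. complex_of_real (cmod (mu j))) * cadj V"
    by (rule mat_abs_decomp[OF Vu AV])
  have absB: "mat_abs B = W * mat_diag n (\<lambda>j. complex_of_real (cmod (nu j))) * cadj W"
    by (rule mat_abs_decomp[OF Wu BW])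
  have V: "V \<in> carrier_mat n n" and W: "W \<in> carrier_mat n n" using Vu Wu unitary_carrier by auto
  define Y where "Y = cadj V * X * W"
  have Y: "Y \<in> carrier_mat n n" unfolding Y_def using V W X by auto
  have XY: "X = V * Y * cadj W"
    unfolding Y_def using V W X unitary_simps(2)[OF Wu] unitary_simps(4)[OF Vu, of _ n]
    by (simp add: assoc_mult_mat[of _ n n _ n _ n] mult_carrier_mat[of _ n n _ n])
  define F where "F = mat_diag n (\<lambda>j. f (mu j))"
  define G where "G = mat_diag n (\<lambda>j. g (nu j))"
  define Am where "Am = mat_diag n (\<lambda>j. complex_of_real (cmod (mu j)))"
  define Bm where "Bm = mat_diag n (\<lambda>j. complex_of_real (cmod (nu j)))"
  define c1 where "c1 = 1 / complex_of_real (dA A)"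
  define c2 where "c2 = 1 / complex_of_real (dA B)"
  define Lm where "Lm = mat_diag n (\<lambda>i. c1 * (1 + complex_of_real (cmod (mu i))))"
  define Rm where "Rm = mat_diag n (\<lambda>i. c2 * (1 + complex_of_real (cmod (nu i))))"
  have FGc: "F \<in> carrier_mat n n" "G \<in> carrier_mat n n" "Am \<in> carrier_mat n n" "Bm \<in> carrier_mat n n"
    "Lm \<in> carrier_mat n n" "Rm \<in> carrier_mat n n"
    unfolding F_def G_def Am_def Bm_def Lm_def Rm_def by auto
  note psiVW = psi_add[OF Vu Wu] psi_minus[OF Vu Wu] psi_smult[OF Vu Wu] psi_left[OF Vu Wu] psi_right[OF Vu Wu]
  have L1: "mat_fun f A * X = V * (F * Y) * cadj W"
    unfolding fA F_def by (subst XY, rule psi_left[OF Vu Wu]) (use Y in auto)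
  have L2: "X * mat_fun g B = V * (Y * G) * cadj W"
    unfolding gB G_def by (subst XY, rule psi_right[OF Vu Wu]) (use Y in auto)
  have L3: "mat_abs A * X = V * (Am * Y) * cadj W"
    unfolding absA Am_def by (subst XY, rule psi_left[OF Vu Wu]) (use Y in auto)
  have L4: "X * mat_abs B = V * (Y * Bm) * cadj W"
    unfolding absB Bm_def by (subst XY, rule psi_right[OF Vu Wu]) (use Y in auto)
  have L5: "mat_fun f A * X * mat_fun g B = V * (F * Y * G) * cadj W"
    unfolding L1 gB G_def[symmetric] by (rule psi_right[OF Vu Wu]) (use Y FGc in auto)
  have one: "1\<^sub>m n = V * 1\<^sub>m n * cadj V"
    using V unitary_simps(2)[OF Vu] by simp
  have oneW: "1\<^sub>m n = W * 1\<^sub>m n * cadj W"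
    using W unitary_simps(2)[OF Wu] by simp
  have L6: "c1 \<cdot>\<^sub>m (1\<^sub>m n + mat_abs A) = V * Lm * cadj V"
  proof -
    have "c1 \<cdot>\<^sub>m (1\<^sub>m n + mat_abs A) = c1 \<cdot>\<^sub>m (V * 1\<^sub>m n * cadj V + V * Am * cadj V)"
      unfolding absA Am_def by (subst one) simp
    also have "\<dots> = V * (c1 \<cdot>\<^sub>m (1\<^sub>m n + Am)) * cadj V"
      using FGc by (simp add: psi_add[OF Vu Vu] psi_smult[OF Vu Vu])
    also have "c1 \<cdot>\<^sub>m (1\<^sub>m n + Am) = Lm"
      unfolding Lm_def Am_def by (rule eq_matI) (auto simp: mat_diag_def algebra_simps)
    finally show ?thesis .
  qed
  have L7: "c2 \<cdot>\<^sub>m (1\<^sub>m n + mat_abs B) = W * Rm * cadj W"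
  proof -
    have "c2 \<cdot>\<^sub>m (1\<^sub>m n + mat_abs B) = c2 \<cdot>\<^sub>m (W * 1\<^sub>m n * cadj W + W * Bm * cadj W)"
      unfolding absB Bm_def by (subst oneW) simp
    also have "\<dots> = W * (c2 \<cdot>\<^sub>m (1\<^sub>m n + Bm)) * cadj W"
      using FGc by (simp add: psi_add[OF Wu Wu] psi_smult[OF Wu Wu])
    also have "c2 \<cdot>\<^sub>m (1\<^sub>m n + Bm) = Rm"
      unfolding Rm_def Bm_def by (rule eq_matI) (auto simp: mat_diag_def algebra_simps)
    finally show ?thesis .
  qed
  have E1: "mat_fun f A * X + X * mat_fun g B = V * (F * Y + Y * G) * cadj W"
    unfolding L1 L2 using Y FGc by (simp add: psiVW)
  have E2: "mat_fun f A * X - X * mat_fun g B = V * (F * Y - Y * G) * cadj W"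
    unfolding L1 L2 using Y FGc by (simp add: psiVW)
  have E3: "c1 \<cdot>\<^sub>m (X + mat_abs A * X) + c2 \<cdot>\<^sub>m (X + X * mat_abs B)
      = V * (c1 \<cdot>\<^sub>m (Y + Am * Y) + c2 \<cdot>\<^sub>m (Y + Y * Bm)) * cadj W"
  proof -
    have "c1 \<cdot>\<^sub>m (X + mat_abs A * X) + c2 \<cdot>\<^sub>m (X + X * mat_abs B)
       = c1 \<cdot>\<^sub>m (V * Y * cadj W + V * (Am * Y) * cadj W) + c2 \<cdot>\<^sub>m (V * Y * cadj W + V * (Y * Bm) * cadj W)"
      unfolding L3 L4 by (simp only: XY[symmetric])
    also have "\<dots> = V * (c1 \<cdot>\<^sub>m (Y + Am * Y) + c2 \<cdot>\<^sub>m (Y + Y * Bm)) * cadj W"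
      using Y FGc by (simp add: psiVW)
    finally show ?thesis .
  qed
  have E4: "mat_fun f A * X * mat_fun g B + X = V * (F * Y * G + Y) * cadj W"
    unfolding L5 by (subst XY) (use Y FGc in \<open>simp add: psiVW\<close>)
  have E5: "mat_fun f A * X * mat_fun g B - X = V * (F * Y * G - Y) * cadj W"
    unfolding L5 by (subst XY) (use Y FGc in \<open>simp add: psiVW\<close>)
  have E6: "c1 \<cdot>\<^sub>m (1\<^sub>m n + mat_abs A) * X * (c2 \<cdot>\<^sub>m (1\<^sub>m n + mat_abs B)) + X
      = V * (Lm * Y * Rm + Y) * cadj W"
    unfolding L6 L7 by (subst (1 2) XY) (use Y FGc in \<open>simp add: psiVW mult_carrier_mat[of _ n n _ n]\<close>)
  have mus: "mu i \<in> spectrum A" if "i < n" for i using diag_eigen[OF Vu AV that] .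
  have nus: "nu i \<in> spectrum B" if "i < n" for i using diag_eigen[OF Wu BW that] .
  have fb: "cmod (f (mu i)) \<le> (1 + cmod (mu i)) / dA A" if "i < n" for i
    using spec_bound[OF A spA mus[OF that] f] .
  have gb: "cmod (g (nu i)) \<le> (1 + cmod (nu i)) / dA B" if "i < n" for i
    using spec_bound[OF B spB nus[OF that] g] .
  have dApos: "dA A > 0" if "i < n" for i using dA_facts(1)[OF A spA mus[OF that]] .
  have dBpos: "dA B > 0" if "i < n" for i using dA_facts(1)[OF B spB nus[OF that]] .
  note idx = mat_diag_mult_left[of _ n n] mat_diag_mult_right[of _ n n]
  have FY: "F * Y \<in> carrier_mat n n" using FGc Y by auto
  have LY: "Lm * Y \<in> carrier_mat n n" using FGc Y by auto
  have P1: "hs_norm (F * Y + Y * G) \<le> hs_norm (c1 \<cdot>\<^sub>m (Y + Am * Y) + c2 \<cdot>\<^sub>m (Y + Y * Bm))"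
  proof (rule hs_mono[of _ n n])
    fix i j assume i: "i < n" and j: "j < n"
    have "cmod ((F * Y + Y * G) $$ (i,j)) = cmod (f (mu i) * Y $$ (i,j) + Y $$ (i,j) * g (nu j))"
      using i j Y FGc by (simp add: F_def G_def idx)
    also have "\<dots> \<le> cmod (Y $$ (i,j)) * ((1 + cmod (mu i)) / dA A + (1 + cmod (nu j)) / dA B)"
      by (rule sc_lhs(1)[OF fb[OF i] gb[OF j]])
    also have "\<dots> = cmod ((c1 \<cdot>\<^sub>m (Y + Am * Y) + c2 \<cdot>\<^sub>m (Y + Y * Bm)) $$ (i,j))"
      using i j Y FGc sc_rhs1[OF dApos[OF i] dBpos[OF j], of "cmod (mu i)" "cmod (nu j)" "Y $$ (i,j)"]
      by (simp add: Am_def Bm_def c1_def c2_def idx)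
    finally show "cmod ((F * Y + Y * G) $$ (i,j)) \<le> cmod ((c1 \<cdot>\<^sub>m (Y + Am * Y) + c2 \<cdot>\<^sub>m (Y + Y * Bm)) $$ (i,j))" .
  qed (use Y FGc in auto)
  have P2: "hs_norm (F * Y - Y * G) \<le> hs_norm (c1 \<cdot>\<^sub>m (Y + Am * Y) + c2 \<cdot>\<^sub>m (Y + Y * Bm))"
  proof (rule hs_mono[of _ n n])
    fix i j assume i: "i < n" and j: "j < n"
    have "cmod ((F * Y - Y * G) $$ (i,j)) = cmod (f (mu i) * Y $$ (i,j) - Y $$ (i,j) * g (nu j))"
      using i j Y FGc by (simp add: F_def G_def idx)
    also have "\<dots> \<le> cmod (Y $$ (i,j)) * ((1 + cmod (mu i)) / dA A + (1 + cmod (nu j)) / dA B)"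
      by (rule sc_lhs(2)[OF fb[OF i] gb[OF j]])
    also have "\<dots> = cmod ((c1 \<cdot>\<^sub>m (Y + Am * Y) + c2 \<cdot>\<^sub>m (Y + Y * Bm)) $$ (i,j))"
      using i j Y FGc sc_rhs1[OF dApos[OF i] dBpos[OF j], of "cmod (mu i)" "cmod (nu j)" "Y $$ (i,j)"]
      by (simp add: Am_def Bm_def c1_def c2_def idx)
    finally show "cmod ((F * Y - Y * G) $$ (i,j)) \<le> cmod ((c1 \<cdot>\<^sub>m (Y + Am * Y) + c2 \<cdot>\<^sub>m (Y + Y * Bm)) $$ (i,j))" .
  qed (use Y FGc in auto)
  have P3: "hs_norm (F * Y * G + Y) \<le> hs_norm (Lm * Y * Rm + Y)"
  proof (rule hs_mono[of _ n n])
    fix i j assume i: "i < n" and j: "j < n"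
    have "cmod ((F * Y * G + Y) $$ (i,j)) = cmod (f (mu i) * Y $$ (i,j) * g (nu j) + Y $$ (i,j))"
      using i j Y FGc FY by (simp add: F_def G_def idx)
    also have "\<dots> \<le> cmod (Y $$ (i,j)) * ((1 + cmod (mu i)) / dA A * ((1 + cmod (nu j)) / dA B) + 1)"
      by (rule sc_lhs(3)[OF fb[OF i] gb[OF j]])
    also have "\<dots> = cmod ((Lm * Y * Rm + Y) $$ (i,j))"
      using i j Y FGc LY sc_rhs2[OF dApos[OF i] dBpos[OF j], of "cmod (mu i)" "cmod (nu j)" "Y $$ (i,j)"]
      by (simp add: Lm_def Rm_def c1_def c2_def idx)
    finally show "cmod ((F * Y * G + Y) $$ (i,j)) \<le> cmod ((Lm * Y * Rm + Y) $$ (i,j))" .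
  qed (use Y FGc in auto)
  have P4: "hs_norm (F * Y * G - Y) \<le> hs_norm (Lm * Y * Rm + Y)"
  proof (rule hs_mono[of _ n n])
    fix i j assume i: "i < n" and j: "j < n"
    have "cmod ((F * Y * G - Y) $$ (i,j)) = cmod (f (mu i) * Y $$ (i,j) * g (nu j) - Y $$ (i,j))"
      using i j Y FGc FY by (simp add: F_def G_def idx)
    also have "\<dots> \<le> cmod (Y $$ (i,j)) * ((1 + cmod (mu i)) / dA A * ((1 + cmod (nu j)) / dA B) + 1)"
      by (rule sc_lhs(4)[OF fb[OF i] gb[OF j]])
    also have "\<dots> = cmod ((Lm * Y * Rm + Y) $$ (i,j))"
      using i j Y FGc LY sc_rhs2[OF dApos[OF i] dBpos[OF j], of "cmod (mu i)" "cmod (nu j)" "Y $$ (i,j)"]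
      by (simp add: Lm_def Rm_def c1_def c2_def idx)
    finally show "cmod ((F * Y * G - Y) $$ (i,j)) \<le> cmod ((Lm * Y * Rm + Y) $$ (i,j))" .
  qed (use Y FGc in auto)
  note hsp = hs_psi[OF Vu Wu]
  have c: "F * Y + Y * G \<in> carrier_mat n n" "F * Y - Y * G \<in> carrier_mat n n"
    "c1 \<cdot>\<^sub>m (Y + Am * Y) + c2 \<cdot>\<^sub>m (Y + Y * Bm) \<in> carrier_mat n n"
    "F * Y * G + Y \<in> carrier_mat n n" "F * Y * G - Y \<in> carrier_mat n n" "Lm * Y * Rm + Y \<in> carrier_mat n n"
    using Y FGc by auto
  show ?thesis
    using P1 P2 P3 P4 E1 E2 E3 E4 E5 E6 hsp[OF c(1)] hsp[OF c(2)] hsp[OF c(3)] hsp[OF c(4)] hsp[OF c(5)] hsp[OF c(6)]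
    unfolding c1_def c2_def by simp
qed

end
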